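(* Let $(X,f)$ be a dynamical system. Then $(X,f)$ is multi-minimal if and only if $(X,f^r)$ is multi-minimal for every $r\in\mathbb{N}$.
   Context: A dynamical system is a pair $(X,f)$ with $X$ a compact metric space and $f:X\to X$ continuous. A system is minimal if it has no proper non-empty closed invariant subset. $(X,f)$ is multi-minimal if for every $n\in\mathbb{N}$ the system $(X^n,f\times f^2\times\dots\times f^n)$ is minimal. *)

theory Defs
  imports "HOL-Analysis.Analysis"
begin

definition dyn_system :: "'a::metric_space set \<Rightarrow> ('a \<Rightarrow> 'a) \<Rightarrow> bool" where
  "dyn_system X f \<longleftrightarrow> compact X \<and> continuous_on X f \<and> f ` X \<subseteq> X"

definition minimal_on :: "'b topology \<Rightarrow> ('b \<Rightarrow> 'b) \<Rightarrow> bool" where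
  "minimal_on T g \<longleftrightarrow>
     (\<forall>A. closedin T A \<and> A \<noteq> {} \<and> g ` A \<subseteq> A \<longrightarrow> A = topspace T)"

definition prod_space :: "'a::metric_space set \<Rightarrow> nat \<Rightarrow> (nat \<Rightarrow> 'a) topology" where
  "prod_space X n = product_topology (\<lambda>i. top_of_set X) {1..n}"

definition prod_map :: "('a \<Rightarrow> 'a) \<Rightarrow> nat \<Rightarrow> (nat \<Rightarrow> 'a) \<Rightarrow> (nat \<Rightarrow> 'a)" where
  "prod_map f n = (\<lambda>x. \<lambda>i\<in>{1..n}. (f ^^ i) (x i))"

definition multi_minimal :: "'a::metric_space set \<Rightarrow> ('a \<Rightarrow> 'a) \<Rightarrow> bool" where
  "multi_minimal X f \<longleftrightarrow> (\<forall>n\<ge>1. minimal_on (prod_space X n) (prod_map f n))"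

end

theory Submission
  imports Defs
begin

lemma funpow_in:
  assumes "f ` X \<subseteq> X" "x \<in> X" shows "(f ^^ i) x \<in> X"
  using assms by (induction i) auto

lemma key:
  fixes X :: "'a::metric_space set" and f :: "'a \<Rightarrow> 'a"
  assumes mm: "multi_minimal X f" and r: "r \<ge> 1" and n: "n \<ge> 1" and fX: "f ` X \<subseteq> X"
  shows "minimal_on (prod_space X n) (prod_map (f ^^ r) n)"
  unfolding minimal_on_def
proof (intro allI impI)
  fix A assume H: "closedin (prod_space X n) A \<and> A \<noteq> {} \<and> prod_map (f ^^ r) n ` A \<subseteq> A"
  define m where "m = n * r"
  have m1: "m \<ge> 1" using n r by (simp add: m_def)
  define \<pi> where "\<pi> = (\<lambda>x::nat \<Rightarrow> 'a. \<lambda>i\<in>{1..n}. x (i * r))"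
  have top: "topspace (prod_space X k) = PiE {1..k} (\<lambda>i. X)" for k
    by (simp add: prod_space_def)
  have idx: "i * r \<in> {1..m}" if "i \<in> {1..n}" for i
    using that r by (auto simp: m_def)
  have cont: "continuous_map (prod_space X m) (prod_space X n) \<pi>"
    unfolding prod_space_def continuous_map_componentwise
  proof
    show "\<pi> ` topspace (product_topology (\<lambda>i. top_of_set X) {1..m}) \<subseteq> extensional {1..n}"
      by (auto simp: \<pi>_def)
    show "\<forall>k\<in>{1..n}. continuous_map (product_topology (\<lambda>i. top_of_set X) {1..m}) (top_of_set X) (\<lambda>x. \<pi> x k)"
    proof
      fix k assume k: "k \<in> {1..n}"
      have "continuous_map (product_topology (\<lambda>i. top_of_set X) {1..m}) (top_of_set X) (\<lambda>x. x (k*r))"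
        using continuous_map_product_projection[OF idx[OF k], of "\<lambda>i. top_of_set X"] by simp
      then show "continuous_map (product_topology (\<lambda>i. top_of_set X) {1..m}) (top_of_set X) (\<lambda>x. \<pi> x k)"
        using k by (simp add: \<pi>_def)
    qed
  qed
  define B where "B = {x \<in> topspace (prod_space X m). \<pi> x \<in> A}"
  have Bc: "closedin (prod_space X m) B"
    unfolding B_def using closedin_continuous_map_preimage[OF cont] H by blast
  have lift: "\<exists>x\<in>topspace (prod_space X m). \<pi> x = y" if y: "y \<in> topspace (prod_space X n)" for y
  proof -
    have yX: "y \<in> PiE {1..n} (\<lambda>i. X)" using y top by simp
    have y1: "y 1 \<in> X" using yX n by auto
    define x where "x = (\<lambda>j\<in>{1..m}. if r dvd j then y (j div r) else y 1)"
    have "x \<in> PiE {1..m} (\<lambda>i. X)"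
    proof -
      have "y (j div r) \<in> X" if jm: "j \<in> {1..m}" and jd: "r dvd j" for j
      proof -
        obtain q where q: "j = r * q" using jd by blast
        have "q \<ge> 1" "q \<le> n" using jm q r by (auto simp: m_def)
        then show ?thesis using yX q r by auto
      qed
      then show ?thesis using y1 by (auto simp: x_def)
    qed
    moreover have "\<pi> x = y"
    proof
      fix i show "\<pi> x i = y i"
        using idx[of i] r yX by (auto simp: \<pi>_def x_def)
    qed
    ultimately show ?thesis using top by auto
  qed
  have Bne: "B \<noteq> {}"
  proof -
    obtain y where "y \<in> A" using H by blast
    moreover have "y \<in> topspace (prod_space X n)" using H \<open>y \<in> A\<close> closedin_subset by blast
    ultimately show ?thesis using lift unfolding B_def by blast
  qed
  have comm: "\<pi> (prod_map f m x) = prod_map (f ^^ r) n (\<pi> x)" for x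
  proof
    fix i show "\<pi> (prod_map f m x) i = prod_map (f ^^ r) n (\<pi> x) i"
    proof (cases "i \<in> {1..n}")
      case True
      have e: "(f ^^ r) ^^ i = f ^^ (i * r)" by (simp add: funpow_mult mult.commute)
      show ?thesis using True idx[OF True] by (simp add: \<pi>_def prod_map_def e)
    next
      case False
      then show ?thesis by (auto simp: \<pi>_def prod_map_def)
    qed
  qed
  have mapsto: "prod_map f m x \<in> topspace (prod_space X m)" if "x \<in> topspace (prod_space X m)" for x
    using that funpow_in[OF fX] by (auto simp: prod_space_def prod_map_def PiE_iff)
  have Binv: "prod_map f m ` B \<subseteq> B"
  proof
    fix z assume "z \<in> prod_map f m ` B"
    then obtain x where x: "x \<in> B" "z = prod_map f m x" by blast
    have "\<pi> z = prod_map (f ^^ r) n (\<pi> x)" using x comm by simp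
    also have "\<dots> \<in> A" using H x by (auto simp: B_def)
    finally show "z \<in> B" using mapsto x by (auto simp: B_def)
  qed
  have mmm: "minimal_on (prod_space X m) (prod_map f m)" using mm m1 multi_minimal_def by blast
  have "B = topspace (prod_space X m)"
    using mmm Bc Bne Binv unfolding minimal_on_def by blast
  then have "\<pi> ` topspace (prod_space X m) \<subseteq> A" unfolding B_def by blast
  moreover have "topspace (prod_space X n) \<subseteq> \<pi> ` topspace (prod_space X m)"
  proof
    fix y assume "y \<in> topspace (prod_space X n)"
    then obtain x where "x \<in> topspace (prod_space X m)" "\<pi> x = y" using lift by blast
    then show "y \<in> \<pi> ` topspace (prod_space X m)" by blast
  qed
  ultimately have "topspace (prod_space X n) \<subseteq> A" by (rule order_trans[rotated])
  moreover have "A \<subseteq> topspace (prod_space X n)" using H closedin_subset by blast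
  ultimately show "A = topspace (prod_space X n)" by (rule equalityI[rotated])
qed

theorem proposition6p2:
  fixes X :: "'a::metric_space set" and f :: "'a \<Rightarrow> 'a"
  assumes "dyn_system X f"
  shows "multi_minimal X f \<longleftrightarrow> (\<forall>r\<ge>1. multi_minimal X (f ^^ r))"
proof
  assume h: "multi_minimal X f"
  have fX: "f ` X \<subseteq> X" using assms unfolding dyn_system_def by blast
  show "\<forall>r\<ge>1. multi_minimal X (f ^^ r)"
  proof (intro allI impI)
    fix r :: nat assume r: "r \<ge> 1"
    show "multi_minimal X (f ^^ r)"
      unfolding multi_minimal_def
    proof (intro allI impI)
      fix n :: nat assume "n \<ge> 1"
      then show "minimal_on (prod_space X n) (prod_map (f ^^ r) n)"
        using key[OF h r _ fX] by blast
    qed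
  qed
next
  assume h: "\<forall>r\<ge>1. multi_minimal X (f ^^ r)"
  have "multi_minimal X (f ^^ 1)" using h by blast
  moreover have "f ^^ 1 = f" by simp
  ultimately show "multi_minimal X f" by simp
qed

end
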